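(* For every positive integer $t$ there exists a constant $C=C(t)$ with the following property. Let $G$ be a bipartite graph containing no copy of $\theta_{3,t}[2]$, let $z_1,z_2$ be distinct vertices of $G$, and let $\ell=|N(z_1,z_2)|$. Let $R=\{v\in V(G)\setminus\{z_1,z_2\}: d(v,z_1,z_2)\ge C\ell^{1/2}\}$. Then the number of triples $(z',w_1,w_2)$ of distinct vertices with $z'\in R$ and $w_1,w_2\in N(z',z_1,z_2)$ is at most $C\ell^2$.
   Context: For vertices $v_1,\dots,v_k$ of a graph, $N(v_1,\dots,v_k)$ denotes their common neighbourhood and $d(v_1,\dots,v_k)=|N(v_1,\dots,v_k)|$. The theta graph $\theta_{3,t}$ is the union of $t$ paths of length $3$ sharing the same two endpoints and pairwise internally vertex-disjoint; $F[2]$ is obtained from a graph $F$ by replacing each vertex by an independent set of size $2$ and each edge by a copy of $K_{2,2}$ between the corresponding sets. *)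

theory Defs
  imports Complex_Main
begin

definition simple_graph :: "'a set \<Rightarrow> ('a \<Rightarrow> 'a \<Rightarrow> bool) \<Rightarrow> bool" where
  "simple_graph V E \<longleftrightarrow> finite V \<and> (\<forall>u v. E u v \<longrightarrow> E v u) \<and> (\<forall>u. \<not> E u u)
     \<and> (\<forall>u v. E u v \<longrightarrow> u \<in> V \<and> v \<in> V)"

definition bipartite :: "'a set \<Rightarrow> ('a \<Rightarrow> 'a \<Rightarrow> bool) \<Rightarrow> bool" where
  "bipartite V E \<longleftrightarrow> (\<exists>A B. A \<union> B = V \<and> A \<inter> B = {} \<and>
      (\<forall>u v. E u v \<longrightarrow> (u \<in> A \<and> v \<in> B) \<or> (u \<in> B \<and> v \<in> A)))"

definition contains_copy :: "'a set \<Rightarrow> ('a \<Rightarrow> 'a \<Rightarrow> bool) \<Rightarrow> 'b set \<Rightarrow> ('b \<Rightarrow> 'b \<Rightarrow> bool) \<Rightarrow> bool" where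
  "contains_copy V E VH EH \<longleftrightarrow> (\<exists>f. inj_on f VH \<and> f ` VH \<subseteq> V \<and>
      (\<forall>u\<in>VH. \<forall>v\<in>VH. EH u v \<longrightarrow> E (f u) (f v)))"

definition common_nbhd :: "'a set \<Rightarrow> ('a \<Rightarrow> 'a \<Rightarrow> bool) \<Rightarrow> 'a set \<Rightarrow> 'a set" where
  "common_nbhd V E S = {w \<in> V. \<forall>v\<in>S. E v w}"

definition common_deg :: "'a set \<Rightarrow> ('a \<Rightarrow> 'a \<Rightarrow> bool) \<Rightarrow> 'a set \<Rightarrow> nat" where
  "common_deg V E S = card (common_nbhd V E S)"

text \<open>The theta graph theta_{3,t}: endpoints TX, TY and for each i < t the path
TX - TA i - TB i - TY.\<close>
datatype theta_vert = TX | TY | TA nat | TB nat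

definition theta_V :: "nat \<Rightarrow> theta_vert set" where
  "theta_V t = {TX, TY} \<union> TA ` {..<t} \<union> TB ` {..<t}"

definition theta_arc :: "nat \<Rightarrow> theta_vert \<Rightarrow> theta_vert \<Rightarrow> bool" where
  "theta_arc t u v \<longleftrightarrow> (\<exists>i<t. (u = TX \<and> v = TA i) \<or> (u = TA i \<and> v = TB i) \<or> (u = TB i \<and> v = TY))"

definition theta_E :: "nat \<Rightarrow> theta_vert \<Rightarrow> theta_vert \<Rightarrow> bool" where
  "theta_E t u v \<longleftrightarrow> theta_arc t u v \<or> theta_arc t v u"

text \<open>Blow-up F[2]: each vertex replaced by two copies, each edge by K_{2,2}.\<close>
definition blowup2_V :: "'b set \<Rightarrow> ('b \<times> bool) set" where
  "blowup2_V VF = VF \<times> (UNIV :: bool set)"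

definition blowup2_E :: "('b \<Rightarrow> 'b \<Rightarrow> bool) \<Rightarrow> ('b \<times> bool) \<Rightarrow> ('b \<times> bool) \<Rightarrow> bool" where
  "blowup2_E EF p q \<longleftrightarrow> EF (fst p) (fst q)"

end

theory Submission
  imports Defs "HOL-Analysis.Convex"
begin

lemma matching_or_cover:
  fixes g :: "nat \<Rightarrow> nat \<Rightarrow> bool"
  assumes "finite S" and irr: "\<forall>b. \<not> g b b"
  shows "(\<exists>h. inj_on (\<lambda>(i,x). h i x) ({..<k} \<times> UNIV) \<and> (\<forall>i<k. \<forall>x. h i x \<in> S) \<and> (\<forall>i<k. g (h i False) (h i True)))
       \<or> (\<exists>K. finite K \<and> card K \<le> 2*k \<and> (\<forall>b\<in>S. \<forall>b'\<in>S. g b b' \<longrightarrow> b \<in> K \<or> b' \<in> K))"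
  using assms(1)
proof (induction k arbitrary: S)
  case 0
  then show ?case by auto
next
  case (Suc k)
  show ?case
  proof (cases "\<exists>b\<in>S. \<exists>b'\<in>S. g b b'")
    case False
    then show ?thesis by (intro disjI2 exI[of _ "{}"]) auto
  next
    case True
    then obtain b b' where bb: "b \<in> S" "b' \<in> S" "g b b'" by blast
    have neq: "b \<noteq> b'" using bb irr by auto
    have fin: "finite (S - {b,b'})" using Suc.prems by auto
    from Suc.IH[OF fin] show ?thesis
    proof
      assume "\<exists>h. inj_on (\<lambda>(i,x). h i x) ({..<k} \<times> UNIV) \<and> (\<forall>i<k. \<forall>x. h i x \<in> S - {b,b'}) \<and> (\<forall>i<k. g (h i False) (h i True))"
      then obtain h where h: "inj_on (\<lambda>(i,x). h i x) ({..<k} \<times> UNIV)" "\<forall>i<k. \<forall>x. h i x \<in> S - {b,b'}" "\<forall>i<k. g (h i False) (h i True)" by blast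
      define h' where "h' = (\<lambda>i x. if i = k then (if x then b' else b) else h i x)"
      have "inj_on (\<lambda>(i,x). h' i x) ({..<Suc k} \<times> (UNIV::bool set))"
      proof (rule inj_onI)
        fix p q assume pq: "p \<in> {..<Suc k} \<times> (UNIV::bool set)" "q \<in> {..<Suc k} \<times> (UNIV::bool set)"
          and eqpq: "(\<lambda>(i,x). h' i x) p = (\<lambda>(i,x). h' i x) q"
        obtain i x where pi: "p = (i,x)" by (cases p)
        obtain j y where qj: "q = (j,y)" by (cases q)
        have ij: "i \<in> {..<Suc k}" "j \<in> {..<Suc k}" using pq pi qj by auto
        have eq: "h' i x = h' j y" using eqpq pi qj by simp
        have "i = j \<and> x = y"
        proof (cases "i = k"; cases "j = k")
          assume "i = k" "j = k" then show ?thesis using eq neq by (auto simp: h'_def split: if_splits)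
        next
          assume "i = k" "j \<noteq> k"
          then have "j < k" using ij by auto
          then have "h j y \<in> S - {b,b'}" using h(2) by blast
          then show ?thesis using eq \<open>i = k\<close> \<open>j \<noteq> k\<close> by (auto simp: h'_def split: if_splits)
        next
          assume "i \<noteq> k" "j = k"
          then have "i < k" using ij by auto
          then have "h i x \<in> S - {b,b'}" using h(2) by blast
          then show ?thesis using eq \<open>j = k\<close> \<open>i \<noteq> k\<close> by (auto simp: h'_def split: if_splits)
        next
          assume "i \<noteq> k" "j \<noteq> k"
          then have "i < k" "j < k" using ij by auto
          moreover have "h i x = h j y" using eq \<open>i \<noteq> k\<close> \<open>j \<noteq> k\<close> by (simp add: h'_def)
          ultimately show ?thesis using inj_onD[OF h(1), of "(i,x)" "(j,y)"] by auto
        qed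
        then show "p = q" using pi qj by simp
      qed
      moreover have "\<forall>i<Suc k. \<forall>x. h' i x \<in> S" using h(2) bb by (auto simp: h'_def less_Suc_eq)
      moreover have "\<forall>i<Suc k. g (h' i False) (h' i True)" using h(3) bb by (auto simp: h'_def less_Suc_eq)
      ultimately show ?thesis by blast
    next
      assume "\<exists>K. finite K \<and> card K \<le> 2*k \<and> (\<forall>c\<in>S - {b,b'}. \<forall>c'\<in>S - {b,b'}. g c c' \<longrightarrow> c \<in> K \<or> c' \<in> K)"
      then obtain K where K: "finite K" "card K \<le> 2*k" "\<forall>c\<in>S - {b,b'}. \<forall>c'\<in>S - {b,b'}. g c c' \<longrightarrow> c \<in> K \<or> c' \<in> K" by blast
      have "card (insert b (insert b' K)) \<le> card K + 2"
        by (metis K(1) add_2_eq_Suc' card_insert_le_m1 le_SucI le_trans nat_le_linear card_insert_if finite_insert) 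
      then show ?thesis using K by (intro disjI2 exI[of _ "insert b (insert b' K)"]) auto
    qed
  qed
qed

lemma pick_pairs:
  fixes A :: "nat \<Rightarrow> nat set"
  assumes "finite Y" "\<forall>i<k. finite (A i) \<and> card (A i) \<ge> 2*k + card Y"
  shows "\<exists>a. inj_on (\<lambda>(i,x). a i x) ({..<k} \<times> (UNIV::bool set)) \<and> (\<forall>i<k. \<forall>x. a i x \<in> A i - Y)"
  using assms(2)
proof (induction k)
  case 0
  then show ?case by auto
next
  case (Suc k)
  have "\<forall>i<k. finite (A i) \<and> card (A i) \<ge> 2*k + card Y"
  proof (intro allI impI)
    fix i assume "i < k"
    then have "finite (A i) \<and> card (A i) \<ge> 2*Suc k + card Y" using Suc.prems by simp
    then show "finite (A i) \<and> card (A i) \<ge> 2*k + card Y" by simp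
  qed
  from Suc.IH[OF this] obtain a where a: "inj_on (\<lambda>(i,x). a i x) ({..<k} \<times> (UNIV::bool set))" "\<forall>i<k. \<forall>x. a i x \<in> A i - Y" by blast
  define U where "U = (\<lambda>(i,x). a i x) ` ({..<k} \<times> (UNIV::bool set))"
  have cU: "card U \<le> 2*k"
  proof -
    have "card U \<le> card ({..<k} \<times> (UNIV::bool set))" unfolding U_def by (rule card_image_le) auto
    also have "\<dots> = 2*k" by (simp add: card_cartesian_product)
    finally show ?thesis .
  qed
  have fk: "finite (A k)" "card (A k) \<ge> 2*Suc k + card Y" using Suc.prems by auto
  have "card (A k) \<le> card (A k - Y - U) + card Y + card U"
  proof -
    have "A k \<subseteq> (A k - Y - U) \<union> Y \<union> U" by auto
    then have "card (A k) \<le> card ((A k - Y - U) \<union> Y \<union> U)"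
      using fk assms(1) by (intro card_mono) (auto simp: U_def)
    also have "\<dots> \<le> card (A k - Y - U) + card Y + card U"
      by (metis (no_types, lifting) add_le_mono card_Un_le le_trans order_refl)
    finally show ?thesis .
  qed
  moreover have "2*Suc k = 2*k+2" by simp
  ultimately have "card (A k - Y - U) \<ge> 2" using fk cU by linarith
  then obtain D where D: "D \<subseteq> A k - Y - U" "card D = 2"
    by (meson obtain_subset_with_card_n)
  then obtain u v where uv: "D = {u, v}" "u \<noteq> v" by (meson card_2_iff)
  define a' where "a' = (\<lambda>i x. if i = k then (if x then v else u) else a i x)"
  have uvin: "u \<in> A k - Y - U" "v \<in> A k - Y - U" using D uv by auto
  have "inj_on (\<lambda>(i,x). a' i x) ({..<Suc k} \<times> (UNIV::bool set))"
  proof (rule inj_onI)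
    fix p q assume pq: "p \<in> {..<Suc k} \<times> (UNIV::bool set)" "q \<in> {..<Suc k} \<times> (UNIV::bool set)"
      and eqpq: "(\<lambda>(i,x). a' i x) p = (\<lambda>(i,x). a' i x) q"
    obtain i x where pi: "p = (i,x)" by (cases p)
    obtain j y where qj: "q = (j,y)" by (cases q)
    have ij: "i \<in> {..<Suc k}" "j \<in> {..<Suc k}" using pq pi qj by auto
    have eq: "a' i x = a' j y" using eqpq pi qj by simp
    have "i = j \<and> x = y"
    proof (cases "i = k"; cases "j = k")
      assume "i = k" "j = k" then show ?thesis using eq uv by (auto simp: a'_def split: if_splits)
    next
      assume "i = k" "j \<noteq> k"
      then have "j < k" using ij by auto
      then have "a j y \<in> U" unfolding U_def by auto
      then show ?thesis using eq uvin \<open>i = k\<close> \<open>j \<noteq> k\<close> by (auto simp: a'_def split: if_splits)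
    next
      assume "i \<noteq> k" "j = k"
      then have "i < k" using ij by auto
      then have "a i x \<in> U" unfolding U_def by auto
      then show ?thesis using eq uvin \<open>j = k\<close> \<open>i \<noteq> k\<close> by (auto simp: a'_def split: if_splits)
    next
      assume "i \<noteq> k" "j \<noteq> k"
      then have "i < k" "j < k" using ij by auto
      moreover have "a i x = a j y" using eq \<open>i \<noteq> k\<close> \<open>j \<noteq> k\<close> by (simp add: a'_def)
      ultimately show ?thesis using inj_onD[OF a(1), of "(i,x)" "(j,y)"] by auto
    qed
    then show "p = q" using pi qj by simp
  qed
  moreover have "\<forall>i<Suc k. \<forall>x. a' i x \<in> A i - Y" using a(2) uvin by (auto simp: a'_def less_Suc_eq)
  ultimately show ?case by blast
qed

lemma core:
  fixes E :: "nat \<Rightarrow> nat \<Rightarrow> bool" and N R :: "nat set" and t :: nat and C :: real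
  assumes finN: "finite N" and finR: "finite R"
  and noconf: "\<And>y1 y2 h. y1 \<in> N \<Longrightarrow> y2 \<in> N \<Longrightarrow> y1 \<noteq> y2 \<Longrightarrow>
      inj_on (\<lambda>(i,x). h i x) ({..<t} \<times> (UNIV::bool set)) \<Longrightarrow>
      (\<forall>i<t. \<forall>x. h i x \<in> R \<and> E (h i x) y1 \<and> E (h i x) y2) \<Longrightarrow>
      (\<forall>i<t. card {w\<in>N. E (h i False) w \<and> E (h i True) w} \<ge> 2*t+2) \<Longrightarrow> False"
  and deg: "\<And>b. b \<in> R \<Longrightarrow> C * sqrt (real (card N)) \<le> real (card {w\<in>N. E b w})"
  and Cdef: "C = 8 * real t + 8"
  shows "real (card (SIGMA b:R. {(w1,w2). w1 \<in> N \<and> E b w1 \<and> w2 \<in> N \<and> E b w2 \<and> w1 \<noteq> w2}))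
           \<le> C * (real (card N))^2"
proof -
  define l where "l = card N"
  define m where "m = 2*t+2"
  define Cq where "Cq q = {w\<in>N. E (fst q) w \<and> E (snd q) w}" for q :: "nat \<times> nat"
  define good where "good b b' \<longleftrightarrow> b \<noteq> b' \<and> card (Cq (b,b')) \<ge> m" for b b'
  define P where "P = {(y1,y2). y1 \<in> N \<and> y2 \<in> N \<and> y1 \<noteq> y2}"
  define S where "S p = {b\<in>R. E b (fst p) \<and> E b (snd p)}" for p :: "nat \<times> nat"
  define Nb where "Nb b = {w\<in>N. E b w}" for b
  define Off where "Off b = {(w1,w2). w1 \<in> N \<and> E b w1 \<and> w2 \<in> N \<and> E b w2 \<and> w1 \<noteq> w2}" for b
  define Tset where "Tset = (SIGMA b:R. Off b)"
  define T where "T = card Tset"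
  have finS: "finite (S p)" for p using finR by (simp add: S_def)
  have finOff: "finite (Off b)" for b
  proof -
    have "Off b \<subseteq> N \<times> N" by (auto simp: Off_def)
    then show ?thesis using finN finite_subset by blast
  qed
  have finP: "finite P" and cardP: "card P \<le> l * l"
  proof -
    have sub: "P \<subseteq> N \<times> N" by (auto simp: P_def)
    then show "finite P" using finN finite_subset by blast
    have "card P \<le> card (N \<times> N)" using sub finN by (intro card_mono) auto
    then show "card P \<le> l * l" by (simp add: l_def card_cartesian_product)
  qed
  have T_P: "T = (\<Sum>p\<in>P. card (S p))"
  proof -
    have "(\<lambda>(b,w1,w2). ((w1,w2),b)) ` Tset = (SIGMA p:P. S p)"
      by (auto simp: Tset_def Off_def P_def S_def image_iff)
    moreover have "inj_on (\<lambda>(b,w1,w2). ((w1,w2),b)) Tset" by (auto simp: inj_on_def)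
    ultimately have "card Tset = card (SIGMA p:P. S p)" by (metis card_image)
    then show ?thesis using finP finS by (simp add: T_def)
  qed
  have T_R: "T = (\<Sum>b\<in>R. card (Off b))"
    using finR finOff by (simp add: T_def Tset_def)
  show ?thesis
  proof (cases "l = 0")
    case True
    then have "N = {}" using finN by (simp add: l_def)
    then have "Tset = {}" by (auto simp: Tset_def Off_def)
    then show ?thesis using Cdef by (simp add: Tset_def Off_def)
  next
    case False
    then have l1: "real l \<ge> 1" by simp
    have C2: "C \<ge> 2" using Cdef by simp
    have sq1: "sqrt (real l) \<ge> 1" using l1 by simp
    have offlow: "real (card (Off b)) \<ge> C^2 * real l / 2" if bR: "b \<in> R" for b
    proof -
      define d where "d = real (card (Nb b))"
      have dC: "d \<ge> C * sqrt (real l)" using deg[OF bR] by (simp add: d_def Nb_def l_def)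
      have "C * 1 \<le> C * sqrt (real l)" using C2 sq1 by (intro mult_left_mono) auto
      then have d2: "d \<ge> 2" using dC C2 by linarith
      have "Nb b \<times> Nb b \<subseteq> Off b \<union> (\<lambda>w. (w,w)) ` Nb b" by (auto simp: Nb_def Off_def)
      then have "card (Nb b \<times> Nb b) \<le> card (Off b \<union> (\<lambda>w. (w,w)) ` Nb b)"
        using finOff finN by (intro card_mono) (auto simp: Nb_def)
      also have "\<dots> \<le> card (Off b) + card ((\<lambda>w. (w,w)) ` Nb b)" by (rule card_Un_le)
      also have "\<dots> \<le> card (Off b) + card (Nb b)" using card_image_le finN
        by (simp add: card_image inj_on_def)
      finally have "card (Nb b) * card (Nb b) \<le> card (Off b) + card (Nb b)"
        by (simp add: card_cartesian_product)
      then have "d * d \<le> real (card (Off b)) + d" unfolding d_def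
        by (metis of_nat_add of_nat_le_iff of_nat_mult)
      moreover have "d * d \<ge> (C * sqrt (real l))^2"
        using dC C2 sq1 by (smt (verit, best) mult_mono power2_eq_square zero_le_mult_iff)
      moreover have "(C * sqrt (real l))^2 = C^2 * real l" using l1 by (simp add: power_mult_distrib)
      moreover have "d * d \<ge> 2 * d" using d2 by (simp add: mult_right_mono)
      ultimately show ?thesis by linarith
    qed
    have Tlow: "real T \<ge> real (card R) * (C^2 * real l / 2)"
    proof -
      have "real (card R) * (C^2 * real l / 2) = (\<Sum>b\<in>R. C^2 * real l / 2)" by simp
      also have "\<dots> \<le> (\<Sum>b\<in>R. real (card (Off b)))" by (rule sum_mono) (rule offlow)
      also have "\<dots> = real T" by (simp add: T_R)
      finally show ?thesis .
    qed
    define Q where "Q = (\<Sum>p\<in>P. (real (card (S p)))^2)"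
    have CS: "(real T)^2 \<le> Q * (real l)^2"
    proof -
      have "(real T)^2 = (\<Sum>p\<in>P. real (card (S p)))^2" by (simp add: T_P)
      also have "\<dots> \<le> Q * real (card P)" unfolding Q_def by (rule sum_squared_le_sum_of_squares)
      also have "\<dots> \<le> Q * (real l)^2"
      proof (rule mult_left_mono)
        show "real (card P) \<le> (real l)^2" using cardP
          by (metis of_nat_le_iff of_nat_mult power2_eq_square)
        show "0 \<le> Q" unfolding Q_def by (intro sum_nonneg) auto
      qed
      finally show ?thesis .
    qed
    define G where "G p = {(b,b'). b \<in> S p \<and> b' \<in> S p \<and> good b b'}" for p
    define B where "B p = {(b,b'). b \<in> S p \<and> b' \<in> S p \<and> b \<noteq> b' \<and> card (Cq (b,b')) < m}" for p
    have finG: "finite (G p)" for p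
    proof -
      have "G p \<subseteq> S p \<times> S p" by (auto simp: G_def)
      then show ?thesis using finS finite_subset by blast
    qed
    have finB: "finite (B p)" for p
    proof -
      have "B p \<subseteq> S p \<times> S p" by (auto simp: B_def)
      then show ?thesis using finS finite_subset by blast
    qed
    have splitp: "card (S p) * card (S p) \<le> card (G p) + card (S p) + card (B p)" for p
    proof -
      have "S p \<times> S p \<subseteq> G p \<union> (\<lambda>w. (w,w)) ` S p \<union> B p"
        by (auto simp: G_def B_def good_def not_le)
      then have "card (S p \<times> S p) \<le> card (G p \<union> (\<lambda>w. (w,w)) ` S p \<union> B p)"
        using finS finG finB by (intro card_mono) auto
      also have "\<dots> \<le> card (G p) + card ((\<lambda>w. (w,w)) ` S p) + card (B p)"
        by (metis (no_types, lifting) add_le_mono card_Un_le le_trans order_refl)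
      also have "card ((\<lambda>w. (w,w)) ` S p) = card (S p)" by (simp add: card_image inj_on_def)
      finally show ?thesis by (simp add: card_cartesian_product)
    qed
    have Gp: "card (G p) \<le> 4 * t * card (S p)" if pP: "p \<in> P" for p
    proof -
      obtain y1 y2 where p: "p = (y1,y2)" "y1 \<in> N" "y2 \<in> N" "y1 \<noteq> y2" using pP by (auto simp: P_def)
      have irr: "\<forall>b. \<not> good b b" by (simp add: good_def)
      from matching_or_cover[of "S p" good t, OF finS[of p] irr] show ?thesis
      proof
        assume "\<exists>h. inj_on (\<lambda>(i,x). h i x) ({..<t} \<times> UNIV) \<and> (\<forall>i<t. \<forall>x. h i x \<in> S p) \<and> (\<forall>i<t. good (h i False) (h i True))"
        then obtain h where h: "inj_on (\<lambda>(i,x). h i x) ({..<t} \<times> (UNIV::bool set))"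
          "\<forall>i<t. \<forall>x. h i x \<in> S p" "\<forall>i<t. good (h i False) (h i True)" by blast
        have "False"
        proof (rule noconf[OF p(2) p(3) p(4) h(1)])
          show "\<forall>i<t. \<forall>x. h i x \<in> R \<and> E (h i x) y1 \<and> E (h i x) y2" using h(2) p(1) by (simp add: S_def)
          show "\<forall>i<t. card {w\<in>N. E (h i False) w \<and> E (h i True) w} \<ge> 2*t+2"
            using h(3) by (simp add: good_def Cq_def m_def)
        qed
        then show ?thesis ..
      next
        assume "\<exists>K. finite K \<and> card K \<le> 2*t \<and> (\<forall>b\<in>S p. \<forall>b'\<in>S p. good b b' \<longrightarrow> b \<in> K \<or> b' \<in> K)"
        then obtain K where K: "finite K" "card K \<le> 2*t" "\<forall>b\<in>S p. \<forall>b'\<in>S p. good b b' \<longrightarrow> b \<in> K \<or> b' \<in> K" by blast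
        have "G p \<subseteq> (K \<inter> S p) \<times> S p \<union> S p \<times> (K \<inter> S p)" using K(3) by (auto simp: G_def)
        then have "card (G p) \<le> card ((K \<inter> S p) \<times> S p \<union> S p \<times> (K \<inter> S p))"
          using finS by (intro card_mono) auto
        also have "\<dots> \<le> card ((K \<inter> S p) \<times> S p) + card (S p \<times> (K \<inter> S p))" by (rule card_Un_le)
        also have "\<dots> = 2 * (card (K \<inter> S p) * card (S p))" by (simp add: card_cartesian_product)
        also have "\<dots> \<le> 2 * (2 * t * card (S p))"
        proof -
          have "card (K \<inter> S p) \<le> card K" using K(1) by (simp add: card_mono)
          then show ?thesis using K(2) by (simp add: mult_right_mono)
        qed
        finally show ?thesis by simp
      qed
    qed
    have Bsum: "(\<Sum>p\<in>P. card (B p)) \<le> m * m * (card R * card R)"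
    proof -
      define Bad where "Bad = {q \<in> R \<times> R. card (Cq q) < m}"
      have finBad: "finite Bad" using finR by (simp add: Bad_def)
      have finCq: "finite (Cq q)" for q using finN by (simp add: Cq_def)
      have "(\<Sum>p\<in>P. card (B p)) = card (SIGMA p:P. B p)" using finP finB by simp
      also have "\<dots> \<le> card (SIGMA q:Bad. Cq q \<times> Cq q)"
      proof (rule card_inj_on_le)
        show "inj_on (\<lambda>(p,q). (q,p)) (SIGMA p:P. B p)" by (auto simp: inj_on_def)
        show "(\<lambda>(p,q). (q,p)) ` (SIGMA p:P. B p) \<subseteq> (SIGMA q:Bad. Cq q \<times> Cq q)"
          by (auto simp: P_def B_def Bad_def Cq_def S_def)
        show "finite (SIGMA q:Bad. Cq q \<times> Cq q)" using finBad finCq by auto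
      qed
      also have "\<dots> = (\<Sum>q\<in>Bad. card (Cq q) * card (Cq q))"
        using finBad finCq by (simp add: card_cartesian_product)
      also have "\<dots> \<le> (\<Sum>q\<in>Bad. m * m)"
        by (rule sum_mono) (auto simp: Bad_def intro: mult_le_mono)
      also have "\<dots> = card Bad * (m * m)" by simp
      also have "\<dots> \<le> card (R \<times> R) * (m * m)"
        using finR by (intro mult_right_mono card_mono) (auto simp: Bad_def)
      finally show ?thesis by (simp add: card_cartesian_product mult.commute)
    qed
    have Qup: "Q \<le> (4 * real t + 1) * real T + real m * real m * (real (card R) * real (card R))"
    proof -
      have "Q \<le> (\<Sum>p\<in>P. real (4 * t * card (S p)) + real (card (S p)) + real (card (B p)))"
        unfolding Q_def
      proof (rule sum_mono)
        fix p assume "p \<in> P"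
        have "card (S p) * card (S p) \<le> 4 * t * card (S p) + card (S p) + card (B p)"
          using splitp[of p] Gp[OF \<open>p \<in> P\<close>] by linarith
        then have "real (card (S p) * card (S p)) \<le> real (4 * t * card (S p) + card (S p) + card (B p))"
          by (simp only: of_nat_le_iff)
        then show "(real (card (S p)))^2 \<le> real (4 * t * card (S p)) + real (card (S p)) + real (card (B p))"
          by (simp add: power2_eq_square)
      qed
      also have "\<dots> = (4 * real t + 1) * (\<Sum>p\<in>P. real (card (S p))) + real (\<Sum>p\<in>P. card (B p))"
        by (simp add: sum.distrib sum_distrib_left algebra_simps)
      also have "\<dots> \<le> (4 * real t + 1) * real T + real m * real m * (real (card R) * real (card R))"
      proof -
        have "real (\<Sum>p\<in>P. card (B p)) \<le> real (m * m * (card R * card R))"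
          using Bsum by (simp only: of_nat_le_iff)
        then show ?thesis by (simp add: T_P)
      qed
      finally show ?thesis .
    qed
    define r where "r = real (card R)"
    define TT where "TT = real T"
    have r0: "r \<ge> 0" by (simp add: r_def)
    have T0: "TT \<ge> 0" by (simp add: TT_def)
    have rT: "r * (C^2 * real l) \<le> 2 * TT" using Tlow unfolding r_def TT_def by linarith
    have m_le: "8 * (real m)^2 \<le> C^2" using Cdef by (simp add: m_def power2_eq_square algebra_simps)
    have C2b: "C^2 \<ge> 1" using C2 by (smt (verit) one_le_power)
    have key: "(real l)^2 * (real m * real m * (r * r)) \<le> TT^2 / 2"
    proof -
      define X where "X = r * real l"
      define c where "c = C^2"
      have X0: "X \<ge> 0" using r0 by (simp add: X_def)
      have "X * c \<le> 2 * TT" using rT by (simp add: X_def c_def algebra_simps)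
      moreover have "X * c \<ge> 0" using X0 by (simp add: c_def)
      ultimately have A1: "(X * c) * (X * c) \<le> (2*TT) * (2*TT)" using mult_mono[of "X*c" "2*TT" "X*c" "2*TT"] by auto
      have "8 * (real m)^2 * (X * X) \<le> c * (X * X)" using m_le by (intro mult_right_mono) (auto simp: c_def)
      also have "\<dots> \<le> c * c * (X * X)"
      proof -
        have c1: "c \<ge> 1" using C2b by (simp add: c_def)
        have "c * 1 \<le> c * c" using c1 by (intro mult_left_mono) auto
        then have "c \<le> c * c" by simp
        then show ?thesis by (rule mult_right_mono) simp
      qed
      also have "c * c * (X * X) = (X * c) * (X * c)" by algebra
      finally have "8 * (real m)^2 * (X * X) \<le> (2*TT) * (2*TT)" using A1 by linarith
      moreover have "(real l)^2 * (real m * real m * (r * r)) = (8 * (real m)^2 * (X * X)) / 8"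
        by (simp add: X_def power2_eq_square)
      moreover have "TT^2 / 2 = ((2*TT) * (2*TT)) / 8" by (simp add: power2_eq_square)
      ultimately show ?thesis by linarith
    qed
    have "TT^2 \<le> (real l)^2 * ((4 * real t + 1) * TT) + TT^2 / 2"
    proof -
      have "TT^2 \<le> Q * (real l)^2" using CS by (simp add: TT_def)
      also have "\<dots> \<le> ((4 * real t + 1) * TT + real m * real m * (r * r)) * (real l)^2"
        using Qup by (intro mult_right_mono) (auto simp: TT_def r_def)
      also have "\<dots> = (real l)^2 * ((4 * real t + 1) * TT) + (real l)^2 * (real m * real m * (r * r))"
        by (simp add: algebra_simps)
      finally show ?thesis using key by linarith
    qed
    moreover have "(real l)^2 * ((4 * real t + 1) * TT) = TT * ((4 * real t + 1) * (real l)^2)" by algebra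
    moreover have "TT^2 = TT * TT" by (simp add: power2_eq_square)
    ultimately have H: "TT * TT \<le> TT * (2 * (4 * real t + 1) * (real l)^2)" by linarith
    have K0: "0 \<le> 2 * (4 * real t + 1) * (real l)^2" by simp
    have "TT \<le> 2 * (4 * real t + 1) * (real l)^2"
    proof (cases "TT = 0")
      case True then show ?thesis using K0 by simp
    next
      case False then have "TT > 0" using T0 by simp
      then show ?thesis using H mult_le_cancel_left_pos by blast
    qed
    moreover have "2 * (4 * real t + 1) * (real l)^2 \<le> C * (real l)^2"
      using Cdef by (intro mult_right_mono) auto
    ultimately show ?thesis by (simp add: TT_def T_def Tset_def Off_def l_def)
  qed
qed

lemma make_copy:
  fixes V :: "nat set" and E :: "nat \<Rightarrow> nat \<Rightarrow> bool" and A :: "nat set"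
  assumes sg: "simple_graph V E" and z: "z1 \<in> V" "z2 \<in> V" "z1 \<noteq> z2"
  and side: "\<And>u v. E u v \<Longrightarrow> (u \<in> A) \<noteq> (v \<in> A)"
  and y: "y1 \<in> common_nbhd V E {z1,z2}" "y2 \<in> common_nbhd V E {z1,z2}" "y1 \<noteq> y2"
  and hinj: "inj_on (\<lambda>(i,x). h i x) ({..<t} \<times> (UNIV::bool set))"
  and hR: "\<forall>i<t. \<forall>x. h i x \<in> V - {z1,z2} \<and> E (h i x) y1 \<and> E (h i x) y2"
  and hc: "\<forall>i<t. card {w\<in>common_nbhd V E {z1,z2}. E (h i False) w \<and> E (h i True) w} \<ge> 2*t+2"
  shows "contains_copy V E (blowup2_V (theta_V t)) (blowup2_E (theta_E t))"
proof -
  define N where "N = common_nbhd V E {z1,z2}"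
  have finV: "finite V" and sym: "\<And>u v. E u v \<Longrightarrow> E v u" and irr: "\<And>u. \<not> E u u"
    and inV: "\<And>u v. E u v \<Longrightarrow> u \<in> V \<and> v \<in> V"
    using sg by (auto simp: simple_graph_def)
  have Nchar: "w \<in> N \<longleftrightarrow> w \<in> V \<and> E z1 w \<and> E z2 w" for w by (auto simp: N_def common_nbhd_def)
  define Af where "Af i = {w\<in>N. E (h i False) w \<and> E (h i True) w}" for i
  have "\<exists>a. inj_on (\<lambda>(i,x). a i x) ({..<t} \<times> (UNIV::bool set)) \<and> (\<forall>i<t. \<forall>x. a i x \<in> Af i - {y1,y2})"
  proof (rule pick_pairs)
    show "finite {y1,y2}" by simp
    show "\<forall>i<t. finite (Af i) \<and> 2 * t + card {y1, y2} \<le> card (Af i)"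
    proof (intro allI impI conjI)
      fix i assume "i < t"
      show "finite (Af i)" using finV by (simp add: Af_def N_def common_nbhd_def)
      show "2 * t + card {y1, y2} \<le> card (Af i)" using hc \<open>i < t\<close> y(3) by (simp add: Af_def N_def)
    qed
  qed
  then obtain a where ainj: "inj_on (\<lambda>(i,x). a i x) ({..<t} \<times> (UNIV::bool set))"
    and aA: "\<forall>i<t. \<forall>x. a i x \<in> Af i - {y1,y2}" by blast
  have yN: "y1 \<in> N" "y2 \<in> N" using y by (auto simp: N_def)
  have aN: "a i x \<in> N" "a i x \<noteq> y1" "a i x \<noteq> y2" "E (h i False) (a i x)" "E (h i True) (a i x)"
    if "i < t" for i x using aA that by (auto simp: Af_def)
  have hE: "h i x \<in> V" "h i x \<noteq> z1" "h i x \<noteq> z2" "E (h i x) y1" "E (h i x) y2" if "i < t" for i x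
    using hR that by auto
  have sy1: "(y1 \<in> A) \<noteq> (z1 \<in> A)" using side yN(1) Nchar by metis
  have sy2: "(y2 \<in> A) \<noteq> (z1 \<in> A)" using side yN(2) Nchar by metis
  have sz2: "(z2 \<in> A) = (z1 \<in> A)" using side yN(1) Nchar sy1 by metis
  have sa: "(a i x \<in> A) \<noteq> (z1 \<in> A)" if "i < t" for i x using side aN(1)[OF that] Nchar by metis
  have sh: "(h i x \<in> A) = (z1 \<in> A)" if "i < t" for i x using side hE(4)[OF that] sy1 by metis
  have zN: "w \<noteq> z1" "w \<noteq> z2" if "w \<in> N" for w using that Nchar irr by metis+
  have ah: "a i x \<noteq> h j y" if "i < t" "j < t" for i j x y using sa[OF that(1)] sh[OF that(2)] by metis
  have ay: "a i x \<noteq> y1" "a i x \<noteq> y2" if "i < t" for i x using aN[OF that] by auto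
  have hy: "h i x \<noteq> y1" "h i x \<noteq> y2" if "i < t" for i x using hE[OF that] irr by metis+
  have aeq: "i < t \<Longrightarrow> j < t \<Longrightarrow> (a i x = a j y) = (i = j \<and> x = y)" for i j x y
    using inj_onD[OF ainj, of "(i,x)" "(j,y)"] by auto
  have heq: "i < t \<Longrightarrow> j < t \<Longrightarrow> (h i x = h j y) = (i = j \<and> x = y)" for i j x y
    using inj_onD[OF hinj, of "(i,x)" "(j,y)"] by auto
  define f where "f = (\<lambda>(v,x). case v of TX \<Rightarrow> (if x then z1 else z2) | TY \<Rightarrow> (if x then y1 else y2)
      | TA i \<Rightarrow> a i x | TB i \<Rightarrow> h i x)"
  have thV: "TA i \<in> theta_V t \<longleftrightarrow> i < t" "TB i \<in> theta_V t \<longleftrightarrow> i < t" "TX \<in> theta_V t" "TY \<in> theta_V t" for i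
    by (auto simp: theta_V_def)
  have ne1: "a i x \<noteq> h j y" "h j y \<noteq> a i x" "a i x \<noteq> y1" "y1 \<noteq> a i x" "a i x \<noteq> y2" "y2 \<noteq> a i x"
      "a i x \<noteq> z1" "z1 \<noteq> a i x" "a i x \<noteq> z2" "z2 \<noteq> a i x"
    if "i < t" "j < t" for i j x y
  proof -
    have A: "a i x \<noteq> h j y" by (rule ah[OF that])
    have B: "a i x \<noteq> y1" "a i x \<noteq> y2" using ay[OF that(1)] by auto
    have Cc: "a i x \<noteq> z1" "a i x \<noteq> z2" using zN[OF aN(1)[OF that(1)]] by auto
    show "a i x \<noteq> h j y" "h j y \<noteq> a i x" "a i x \<noteq> y1" "y1 \<noteq> a i x" "a i x \<noteq> y2" "y2 \<noteq> a i x"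
      "a i x \<noteq> z1" "z1 \<noteq> a i x" "a i x \<noteq> z2" "z2 \<noteq> a i x"
      by (metis A B Cc)+
  qed
  have ne2: "h i x \<noteq> y1" "y1 \<noteq> h i x" "h i x \<noteq> y2" "y2 \<noteq> h i x"
      "h i x \<noteq> z1" "z1 \<noteq> h i x" "h i x \<noteq> z2" "z2 \<noteq> h i x"
    if "i < t" for i x
  proof -
    have B: "h i x \<noteq> y1" "h i x \<noteq> y2" "h i x \<noteq> z1" "h i x \<noteq> z2" using hy[OF that] hE[OF that] by auto
    show "h i x \<noteq> y1" "y1 \<noteq> h i x" "h i x \<noteq> y2" "y2 \<noteq> h i x"
      "h i x \<noteq> z1" "z1 \<noteq> h i x" "h i x \<noteq> z2" "z2 \<noteq> h i x" by (metis B)+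
  qed
  have ne3: "y1 \<noteq> z1" "z1 \<noteq> y1" "y2 \<noteq> z1" "z1 \<noteq> y2" "y1 \<noteq> z2" "z2 \<noteq> y1" "y2 \<noteq> z2" "z2 \<noteq> y2"
  proof -
    have B: "y1 \<noteq> z1" "y2 \<noteq> z1" "y1 \<noteq> z2" "y2 \<noteq> z2" using zN[OF yN(1)] zN[OF yN(2)] by auto
    show "y1 \<noteq> z1" "z1 \<noteq> y1" "y2 \<noteq> z1" "z1 \<noteq> y2" "y1 \<noteq> z2" "z2 \<noteq> y1" "y2 \<noteq> z2" "z2 \<noteq> y2"
      by (metis B)+
  qed
  have "inj_on f (blowup2_V (theta_V t))"
  proof (rule inj_onI)
    fix p q assume pq: "p \<in> blowup2_V (theta_V t)" "q \<in> blowup2_V (theta_V t)" and eq: "f p = f q"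
    obtain u x where p: "p = (u,x)" by (cases p)
    obtain v y where q: "q = (v,y)" by (cases q)
    have u: "u \<in> theta_V t" and v: "v \<in> theta_V t" using pq p q by (auto simp: blowup2_V_def)
    have eq': "f (u,x) = f (v,y)" using eq p q by simp
    have "u = v \<and> x = y"
    proof (cases u; cases v; cases x; cases y)
    qed (use u v eq' z(3) y(3) in \<open>simp_all add: f_def thV ne1 ne2 ne3 aeq heq\<close>)
    then show "p = q" unfolding p q by simp
  qed
  moreover have "f ` blowup2_V (theta_V t) \<subseteq> V"
  proof
    fix w assume "w \<in> f ` blowup2_V (theta_V t)"
    then obtain u x where u: "u \<in> theta_V t" and w: "w = f (u,x)" by (auto simp: blowup2_V_def)
    show "w \<in> V" using u w z yN aN(1) hE(1) thV by (cases u) (auto simp: f_def Nchar)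
  qed
  moreover have "\<forall>p\<in>blowup2_V (theta_V t). \<forall>q\<in>blowup2_V (theta_V t).
      blowup2_E (theta_E t) p q \<longrightarrow> E (f p) (f q)"
  proof (intro ballI impI)
    fix p q assume "p \<in> blowup2_V (theta_V t)" "q \<in> blowup2_V (theta_V t)"
      and e: "blowup2_E (theta_E t) p q"
    obtain u x where p: "p = (u,x)" by (cases p)
    obtain v y where q: "q = (v,y)" by (cases q)
    have E1: "E z1 w" "E w z1" "E z2 w" "E w z2" if "w \<in> N" for w using that Nchar sym by blast+
    have E2: "E (h i x) (a i y)" "E (a i y) (h i x)" if "i < t" for i x y
      using aN(4,5)[OF that, of y] sym by (cases x; auto)+
    have E3: "E (h i x) y1" "E y1 (h i x)" "E (h i x) y2" "E y2 (h i x)" if "i < t" for i x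
      using hE(4,5)[OF that] sym by blast+
    have "theta_E t u v" using e p q by (simp add: blowup2_E_def)
    then obtain i where i: "i < t" and cs: "(u = TX \<and> v = TA i) \<or> (u = TA i \<and> v = TB i) \<or> (u = TB i \<and> v = TY)
        \<or> (v = TX \<and> u = TA i) \<or> (v = TA i \<and> u = TB i) \<or> (v = TB i \<and> u = TY)"
      by (auto simp: theta_E_def theta_arc_def)
    have F: "E z1 (a i x')" "E (a i x') z1" "E z2 (a i x')" "E (a i x') z2" for x'
      using E1[OF aN(1)[OF i]] by auto
    show "E (f p) (f q)" unfolding p q using cs
      by (elim disjE conjE; cases x; cases y; simp add: f_def F E2[OF i] E3[OF i])
  qed
  ultimately show ?thesis unfolding contains_copy_def by blast
qed

theorem mainTheorem6:
  "\<forall>t::nat. t > 0 \<longrightarrow> (\<exists>C::real. \<forall>(V::nat set) E z1 z2.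
     simple_graph V E \<and> bipartite V E \<and>
     \<not> contains_copy V E (blowup2_V (theta_V t)) (blowup2_E (theta_E t)) \<and>
     z1 \<in> V \<and> z2 \<in> V \<and> z1 \<noteq> z2 \<longrightarrow>
     (let l = common_deg V E {z1, z2};
          R = {v \<in> V - {z1, z2}. real (common_deg V E {v, z1, z2}) \<ge> C * sqrt (real l)}
      in real (card {(z', w1, w2). z' \<in> R \<and> w1 \<in> common_nbhd V E {z', z1, z2} \<and>
                       w2 \<in> common_nbhd V E {z', z1, z2} \<and>
                       z' \<noteq> w1 \<and> z' \<noteq> w2 \<and> w1 \<noteq> w2})
         \<le> C * (real l)^2))"
proof (intro allI impI)
  fix t :: nat assume "t > 0"
  define C where "C = 8 * real t + 8"
  show "\<exists>C::real. \<forall>(V::nat set) E z1 z2.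
     simple_graph V E \<and> bipartite V E \<and>
     \<not> contains_copy V E (blowup2_V (theta_V t)) (blowup2_E (theta_E t)) \<and>
     z1 \<in> V \<and> z2 \<in> V \<and> z1 \<noteq> z2 \<longrightarrow>
     (let l = common_deg V E {z1, z2};
          R = {v \<in> V - {z1, z2}. real (common_deg V E {v, z1, z2}) \<ge> C * sqrt (real l)}
      in real (card {(z', w1, w2). z' \<in> R \<and> w1 \<in> common_nbhd V E {z', z1, z2} \<and>
                       w2 \<in> common_nbhd V E {z', z1, z2} \<and>
                       z' \<noteq> w1 \<and> z' \<noteq> w2 \<and> w1 \<noteq> w2})
         \<le> C * (real l)^2)"
  proof (intro exI[of _ C] allI impI)
    fix V :: "nat set" and E z1 z2
    assume H: "simple_graph V E \<and> bipartite V E \<and>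
     \<not> contains_copy V E (blowup2_V (theta_V t)) (blowup2_E (theta_E t)) \<and>
     z1 \<in> V \<and> z2 \<in> V \<and> z1 \<noteq> z2"
    have sg: "simple_graph V E" and bip: "bipartite V E"
      and nc: "\<not> contains_copy V E (blowup2_V (theta_V t)) (blowup2_E (theta_E t))"
      and z: "z1 \<in> V" "z2 \<in> V" "z1 \<noteq> z2" using H by auto
    have finV: "finite V" and irr: "\<And>u. \<not> E u u" and inV: "\<And>u v. E u v \<Longrightarrow> u \<in> V \<and> v \<in> V"
      using sg by (auto simp: simple_graph_def)
    obtain A B where AB: "A \<union> B = V" "A \<inter> B = {}"
      "\<forall>u v. E u v \<longrightarrow> (u \<in> A \<and> v \<in> B) \<or> (u \<in> B \<and> v \<in> A)"
      using bip unfolding bipartite_def by blast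
    have side: "(u \<in> A) \<noteq> (v \<in> A)" if "E u v" for u v using AB that by blast
    define N where "N = common_nbhd V E {z1,z2}"
    define l where "l = common_deg V E {z1, z2}"
    have l: "l = card N" by (simp add: l_def N_def common_deg_def)
    define R where "R = {v \<in> V - {z1, z2}. real (common_deg V E {v, z1, z2}) \<ge> C * sqrt (real l)}"
    have nb: "common_nbhd V E {b,z1,z2} = {w\<in>N. E b w}" for b
      by (auto simp: common_nbhd_def N_def)
    have finN: "finite N" using finV by (simp add: N_def common_nbhd_def)
    have finR: "finite R" using finV by (simp add: R_def)
    have core_app: "real (card (SIGMA b:R. {(w1,w2). w1 \<in> N \<and> E b w1 \<and> w2 \<in> N \<and> E b w2 \<and> w1 \<noteq> w2}))
           \<le> C * (real (card N))^2"
    proof (rule core[OF finN finR])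
      fix y1 y2 h
      assume y: "y1 \<in> N" "y2 \<in> N" "y1 \<noteq> y2"
        and hinj: "inj_on (\<lambda>(i,x). h i x) ({..<t} \<times> (UNIV::bool set))"
        and hR: "\<forall>i<t. \<forall>x. h i x \<in> R \<and> E (h i x) y1 \<and> E (h i x) y2"
        and hc: "\<forall>i<t. card {w\<in>N. E (h i False) w \<and> E (h i True) w} \<ge> 2*t+2"
      have "contains_copy V E (blowup2_V (theta_V t)) (blowup2_E (theta_E t))"
      proof (rule make_copy[OF sg z side])
        show "y1 \<in> common_nbhd V E {z1,z2}" "y2 \<in> common_nbhd V E {z1,z2}" "y1 \<noteq> y2"
          using y by (auto simp: N_def)
        show "inj_on (\<lambda>(i,x). h i x) ({..<t} \<times> (UNIV::bool set))" by (rule hinj)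
        show "\<forall>i<t. \<forall>x. h i x \<in> V - {z1,z2} \<and> E (h i x) y1 \<and> E (h i x) y2"
          using hR by (auto simp: R_def)
        show "\<forall>i<t. card {w\<in>common_nbhd V E {z1,z2}. E (h i False) w \<and> E (h i True) w} \<ge> 2*t+2"
          using hc by (simp add: N_def)
      qed
      then show False using nc by blast
    next
      fix b assume "b \<in> R"
      then show "C * sqrt (real (card N)) \<le> real (card {w\<in>N. E b w})"
        by (simp add: R_def common_deg_def nb l)
    qed (simp add: C_def)
    have seteq: "{(z', w1, w2). z' \<in> R \<and> w1 \<in> common_nbhd V E {z', z1, z2} \<and>
                       w2 \<in> common_nbhd V E {z', z1, z2} \<and>
                       z' \<noteq> w1 \<and> z' \<noteq> w2 \<and> w1 \<noteq> w2}
       = (SIGMA b:R. {(w1,w2). w1 \<in> N \<and> E b w1 \<and> w2 \<in> N \<and> E b w2 \<and> w1 \<noteq> w2})"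
      using irr by (auto simp: nb)
    show "let l = common_deg V E {z1, z2};
          R = {v \<in> V - {z1, z2}. real (common_deg V E {v, z1, z2}) \<ge> C * sqrt (real l)}
      in real (card {(z', w1, w2). z' \<in> R \<and> w1 \<in> common_nbhd V E {z', z1, z2} \<and>
                       w2 \<in> common_nbhd V E {z', z1, z2} \<and>
                       z' \<noteq> w1 \<and> z' \<noteq> w2 \<and> w1 \<noteq> w2})
         \<le> C * (real l)^2"
      unfolding Let_def R_def[symmetric] l_def[symmetric] seteq using core_app l by simp
  qed
qed

end
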